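(* Let $X$ be a real Hilbert space, and suppose that $A,B$ are bodies in $X$ and that $A$ is LUR. Then the couple $(A,B)$ is stable.
   Context: A body is a closed convex subset of $X$ with nonempty interior. A point $x\in\partial A$ of a body $A$ is an LUR (locally uniformly rotund) point of $A$ if for each $\epsilon>0$ there is $\delta>0$ such that whenever $y\in A$ and $\mathrm{dist}(\partial A,(x+y)/2)<\delta$ we have $\|x-y\|<\epsilon$; $A$ is LUR if every point of $\partial A$ is an LUR point. $P_C$ is the metric projection onto a closed convex nonempty set $C$; $B_X$ the closed unit ball; $\mathrm{dist}(x,S)=\inf_{s\in S}\|x-s\|$, $\mathrm{dist}(S,T)=\inf_{s\in S}\mathrm{dist}(s,T)$. $E=\{a\in A:\mathrm{dist}(a,B)=\mathrm{dist}(A,B)\}$, $F=\{b\in B:\mathrm{dist}(b,A)=\mathrm{dist}(A,B)\}$. Attouch–Wets convergence: for nonempty closed $C,D$ and $N\in\mathbb N$ let $e_N(C,D)=\sup_{c\in C\cap NB_X}\mathrm{dist}(c,D)$ ($0$ if $C\cap NB_X=\emptyset$), $h_N(C,D)=\max\{e_N(C,D),e_N(D,C)\}$; $C_j\to C$ if $h_N(C_j,C)\to0$ for every $N$. Given sequences $\{A_n\},\{B_n\}$ of closed convex nonempty sets and $a_0\in X$, the perturbed alternating projections sequences are $b_n=P_{B_n}(a_{n-1})$, $a_n=P_{A_n}(b_n)$ ($n\in\mathbb N$). The couple $(A,B)$ (with $E,F$ nonempty) is stable if for every choice of sequences $\{A_n\},\{B_n\}$ of closed convex nonempty sets converging in the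 Attouch–Wets sense to $A$ and $B$ respectively, and every $a_0\in X$, the corresponding perturbed alternating projections sequences $\{a_n\}$ and $\{b_n\}$ converge in norm. *)

theory Defs
  imports "HOL-Analysis.Analysis"
begin

definition body :: "'a::real_normed_vector set \<Rightarrow> bool" where
  "body A \<longleftrightarrow> closed A \<and> convex A \<and> interior A \<noteq> {}"

definition LUR_point :: "'a::real_normed_vector set \<Rightarrow> 'a \<Rightarrow> bool" where
  "LUR_point A x \<longleftrightarrow> x \<in> frontier A \<and>
     (\<forall>\<epsilon>>0. \<exists>\<delta>>0. \<forall>y\<in>A. infdist ((1/2) *\<^sub>R (x + y)) (frontier A) < \<delta> \<longrightarrow> norm (x - y) < \<epsilon>)"

definition LUR :: "'a::real_normed_vector set \<Rightarrow> bool" where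
  "LUR A \<longleftrightarrow> (\<forall>x\<in>frontier A. LUR_point A x)"

text \<open>Metric projection onto C (well defined and unique for closed convex nonempty C
  in a Hilbert space).\<close>
definition metric_proj :: "'a::real_normed_vector set \<Rightarrow> 'a \<Rightarrow> 'a" where
  "metric_proj C x = (SOME y. y \<in> C \<and> (\<forall>z\<in>C. dist x y \<le> dist x z))"

text \<open>dist(A,B) = inf over a in A of dist(a,B); sets E and F.\<close>
definition set_dist :: "'a::real_normed_vector set \<Rightarrow> 'a set \<Rightarrow> real" where
  "set_dist S T = (INF s\<in>S. infdist s T)"

definition best_A :: "'a::real_normed_vector set \<Rightarrow> 'a set \<Rightarrow> 'a set" where
  "best_A A B = {a\<in>A. infdist a B = set_dist A B}"

definition best_B :: "'a::real_normed_vector set \<Rightarrow> 'a set \<Rightarrow> 'a set" where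
  "best_B A B = {b\<in>B. infdist b A = set_dist A B}"

definition aw_exc :: "nat \<Rightarrow> 'a::real_normed_vector set \<Rightarrow> 'a set \<Rightarrow> real" where
  "aw_exc N C D = (if C \<inter> cball 0 (real N) = {} then 0
                   else (SUP c\<in>C \<inter> cball 0 (real N). infdist c D))"

definition aw_h :: "nat \<Rightarrow> 'a::real_normed_vector set \<Rightarrow> 'a set \<Rightarrow> real" where
  "aw_h N C D = max (aw_exc N C D) (aw_exc N D C)"

definition AW_converges :: "(nat \<Rightarrow> 'a::real_normed_vector set) \<Rightarrow> 'a set \<Rightarrow> bool" where
  "AW_converges Cs C \<longleftrightarrow> (\<forall>N::nat. N \<ge> 1 \<longrightarrow> (\<lambda>j. aw_h N (Cs j) C) \<longlonglongrightarrow> 0)"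

text \<open>Stability of the couple (A,B) (defined for couples with E, F nonempty).
  Perturbed alternating projections: b_n = P_{B_n}(a_{n-1}), a_n = P_{A_n}(b_n), n \<ge> 1.\<close>
definition stable :: "'a::real_normed_vector set \<Rightarrow> 'a set \<Rightarrow> bool" where
  "stable A B \<longleftrightarrow>
     (\<forall>As Bs. (\<forall>n. closed (As n) \<and> convex (As n) \<and> As n \<noteq> {}) \<and>
              (\<forall>n. closed (Bs n) \<and> convex (Bs n) \<and> Bs n \<noteq> {}) \<and>
              AW_converges As A \<and> AW_converges Bs B \<longrightarrow>
        (\<forall>a b :: nat \<Rightarrow> 'a.
            (\<forall>n. b (Suc n) = metric_proj (Bs (Suc n)) (a n) \<and>
                 a (Suc n) = metric_proj (As (Suc n)) (b (Suc n))) \<longrightarrow>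
            convergent a \<and> convergent b))"

end

theory Submission
  imports Defs
begin

lemma parallelogram_law:
  fixes a b :: "'a::real_inner"
  shows "norm (a + b)^2 + norm (a - b)^2 = 2*norm a^2 + 2*norm b^2"
  by (simp add: power2_norm_eq_inner algebra_simps inner_commute)

lemma norm_diff_sq:
  fixes a b :: "'a::real_inner"
  shows "norm (a - b)^2 = norm a^2 - 2 * inner a b + norm b^2"
  by (simp add: power2_norm_eq_inner algebra_simps inner_commute)

lemma norm_add_sq:
  fixes a b :: "'a::real_inner"
  shows "norm (a + b)^2 = norm a^2 + 2 * inner a b + norm b^2"
  by (simp add: power2_norm_eq_inner algebra_simps inner_commute)

lemma infdist_close:
  assumes "S \<noteq> {}" "infdist x S < r"
  shows "\<exists>y\<in>S. dist x y < r"
proof -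
  have "(INF a\<in>S. dist x a) < r" using assms infdist_notempty by metis
  then show ?thesis using assms(1) by (simp add: cINF_less_iff)
qed

lemma infdist_geI:
  assumes "S \<noteq> {}" "\<And>y. y \<in> S \<Longrightarrow> r \<le> dist x y"
  shows "r \<le> infdist x S"
  using assms by (simp add: infdist_notempty cINF_greatest)

lemma proj_exists:
  fixes C :: "'a::{real_inner,complete_space} set"
  assumes cl: "closed C" and cv: "convex C" and ne: "C \<noteq> {}"
  shows "\<exists>y. y \<in> C \<and> (\<forall>z\<in>C. dist x y \<le> dist x z)"
proof -
  define \<delta> where "\<delta> = infdist x C"
  have d0: "0 \<le> \<delta>" unfolding \<delta>_def by (rule infdist_nonneg)
  have "\<forall>k::nat. \<exists>y\<in>C. dist x y < \<delta> + 1/(real k + 1)"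
    using infdist_close[OF ne] unfolding \<delta>_def by (simp add: add_pos_pos)
  then obtain z where zC: "\<And>k. z k \<in> C" and zd: "\<And>k. dist x (z k) < \<delta> + 1/(real k + 1)"
    by metis
  have low: "\<delta> \<le> dist x y" if "y \<in> C" for y
    unfolding \<delta>_def using that by (rule infdist_le)
  have key: "norm (z k - z m)^2 \<le> 4 * ((\<delta> + 1/(real K + 1))^2 - \<delta>^2)"
    if "k \<ge> K" "m \<ge> K" for k m K
  proof -
    have mid: "(1/2) *\<^sub>R (z k + z m) \<in> C"
      using convexD[OF cv zC[of k] zC[of m], of "1/2" "1/2"] by (simp add: scaleR_right_distrib)
    have "\<delta> \<le> norm (x - (1/2) *\<^sub>R (z k + z m))"
      using low[OF mid] by (simp add: dist_norm)
    hence m2: "\<delta>^2 \<le> norm (x - (1/2) *\<^sub>R (z k + z m))^2"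
      using d0 power_mono by blast
    have "2 *\<^sub>R (x - (1/2) *\<^sub>R (z k + z m)) = (x - z k) + (x - z m)"
      by (simp add: algebra_simps scaleR_2)
    hence "norm ((x - z k) + (x - z m))^2 = 4 * norm (x - (1/2) *\<^sub>R (z k + z m))^2"
    proof -
      have "norm ((x - z k) + (x - z m)) = 2 * norm (x - (1/2) *\<^sub>R (z k + z m))"
        by (metis \<open>2 *\<^sub>R (x - (1/2) *\<^sub>R (z k + z m)) = (x - z k) + (x - z m)\<close> norm_scaleR abs_numeral)
      thus ?thesis by (simp add: power_mult_distrib)
    qed
    moreover have "norm ((x - z k) - (x - z m)) = norm (z k - z m)"
      by (metis norm_minus_commute diff_diff_eq2 diff_add_cancel add_diff_cancel_left' diff_diff_cancel
          minus_diff_eq diff_minus_eq_add add.commute)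
    ultimately have eq: "norm (z k - z m)^2 = 2*norm (x - z k)^2 + 2*norm (x - z m)^2
        - 4 * norm (x - (1/2) *\<^sub>R (z k + z m))^2"
    proof -
      assume a1: "norm ((x - z k) + (x - z m))^2 = 4 * norm (x - (1/2) *\<^sub>R (z k + z m))^2"
        and a2: "norm ((x - z k) - (x - z m)) = norm (z k - z m)"
      have "norm ((x - z k) + (x - z m))^2 + norm (z k - z m)^2 = 2*norm (x - z k)^2 + 2*norm (x - z m)^2"
        using parallelogram_law[of "x - z k" "x - z m"] a2 by metis
      thus ?thesis using a1 by linarith
    qed
    have b1: "1/(real k + 1) \<le> 1/(real K + 1)" using that(1) by (simp add: frac_le)
    have b2: "1/(real m + 1) \<le> 1/(real K + 1)" using that(2) by (simp add: frac_le)
    have "norm (x - z k) \<le> \<delta> + 1/(real K + 1)" using zd[of k] b1 by (simp add: dist_norm)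
    hence n1: "norm (x - z k)^2 \<le> (\<delta> + 1/(real K + 1))^2" by (simp add: power_mono)
    have "norm (x - z m) \<le> \<delta> + 1/(real K + 1)" using zd[of m] b2 by (simp add: dist_norm)
    hence n2: "norm (x - z m)^2 \<le> (\<delta> + 1/(real K + 1))^2" by (simp add: power_mono)
    show ?thesis using eq n1 n2 m2
      by (smt (verit))
  qed
  have "Cauchy z"
  proof (rule metric_CauchyI)
    fix e :: real assume e: "0 < e"
    obtain K :: nat where K: "4 * (2*\<delta> + 1) / e^2 < real K"
      using reals_Archimedean2 by blast
    have Kp: "0 < real K + 1" by simp
    have "4 * (2*\<delta> + 1) < e^2 * (real K + 1)"
    proof -
      have "0 < e^2" using e by simp
      moreover have "4 * (2*\<delta> + 1) < real K * e^2"
        using K \<open>0 < e^2\<close> by (simp add: pos_divide_less_eq)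
      ultimately show ?thesis by (simp add: algebra_simps) (smt (verit) \<open>0 < e^2\<close>)
    qed
    have "4 * ((\<delta> + 1/(real K + 1))^2 - \<delta>^2) = 4 * (2*\<delta> + 1/(real K+1)) / (real K + 1)"
    proof -
      have "(\<delta> + 1/(real K + 1))^2 - \<delta>^2 = (2*\<delta> + 1/(real K+1)) * (1/(real K + 1))"
        by (simp add: power2_eq_square algebra_simps)
      thus ?thesis by simp
    qed
    also have "\<dots> \<le> 4 * (2*\<delta> + 1) / (real K + 1)"
      using Kp d0 by (intro divide_right_mono) (auto simp: field_simps)
    also have "\<dots> < e^2" using \<open>4 * (2*\<delta> + 1) < e^2 * (real K + 1)\<close> Kp
      by (simp add: field_simps)
    finally have lt: "4 * ((\<delta> + 1/(real K + 1))^2 - \<delta>^2) < e^2" .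
    show "\<exists>M. \<forall>m\<ge>M. \<forall>n\<ge>M. dist (z m) (z n) < e"
    proof (intro exI allI impI)
      fix m n assume "K \<le> m" "K \<le> n"
      hence "norm (z m - z n)^2 < e^2" using key[of K m n] lt by linarith
      thus "dist (z m) (z n) < e" using e by (simp add: dist_norm power_less_imp_less_base)
    qed
  qed
  then obtain p where zp: "z \<longlonglongrightarrow> p" using Cauchy_convergent_iff convergent_def by blast
  have pC: "p \<in> C" using closed_sequentially[OF cl] zC zp by blast
  have "(\<lambda>k. dist x (z k)) \<longlonglongrightarrow> dist x p" by (intro tendsto_intros zp)
  moreover have "(\<lambda>k. \<delta> + 1/(real k + 1)) \<longlonglongrightarrow> \<delta> + 0"
  proof (intro tendsto_intros)
    show "(\<lambda>k. 1/(real k + 1)) \<longlonglongrightarrow> 0"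
      using LIMSEQ_inverse_real_of_nat by (simp add: inverse_eq_divide add.commute)
  qed
  ultimately have "dist x p \<le> \<delta>"
    using zd by (intro LIMSEQ_le) (auto intro: less_imp_le)
  thus ?thesis using pC low by (meson order_trans)
qed

lemma mp_props:
  fixes C :: "'a::{real_inner,complete_space} set"
  assumes "closed C" "convex C" "C \<noteq> {}"
  shows "metric_proj C x \<in> C \<and> (\<forall>z\<in>C. dist x (metric_proj C x) \<le> dist x z)"
  unfolding metric_proj_def using proj_exists[OF assms, of x] by (rule someI_ex)

lemma mp_in:
  fixes C :: "'a::{real_inner,complete_space} set"
  assumes "closed C" "convex C" "C \<noteq> {}"
  shows "metric_proj C x \<in> C"
  using mp_props[OF assms] by blast

lemma mp_min:
  fixes C :: "'a::{real_inner,complete_space} set"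
  assumes "closed C" "convex C" "C \<noteq> {}" "z \<in> C"
  shows "norm (x - metric_proj C x) \<le> norm (x - z)"
  using mp_props[OF assms(1-3)] assms(4) by (auto simp: dist_norm)

lemma mp_infdist:
  fixes C :: "'a::{real_inner,complete_space} set"
  assumes "closed C" "convex C" "C \<noteq> {}"
  shows "norm (x - metric_proj C x) = infdist x C"
proof (rule antisym)
  show "norm (x - metric_proj C x) \<le> infdist x C"
    using mp_min[OF assms] by (intro infdist_geI[OF assms(3)]) (auto simp: dist_norm)
  show "infdist x C \<le> norm (x - metric_proj C x)"
    using infdist_le[OF mp_in[OF assms]] by (simp add: dist_norm)
qed

lemma mp_vi:
  fixes C :: "'a::{real_inner,complete_space} set"
  assumes cl: "closed C" and cv: "convex C" and ne: "C \<noteq> {}" and z: "z \<in> C"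
  shows "inner (x - metric_proj C x) (z - metric_proj C x) \<le> 0"
proof (rule ccontr)
  define p where "p = metric_proj C x"
  define \<alpha> where "\<alpha> = inner (x - p) (z - p)"
  assume "\<not> ?thesis"
  hence a: "0 < \<alpha>" unfolding \<alpha>_def p_def by simp
  define t where "t = min 1 (\<alpha> / (norm (z - p)^2 + 1))"
  have sq1: "0 < norm (z - p)^2 + 1" by (rule add_nonneg_pos) auto
  have t0: "0 < t" unfolding t_def using a sq1 by simp
  have t1: "t \<le> 1" unfolding t_def by simp
  have "t * norm (z - p)^2 \<le> \<alpha> / (norm (z - p)^2 + 1) * norm (z - p)^2"
    unfolding t_def by (intro mult_right_mono) auto
  also have "\<dots> < \<alpha>"
  proof -
    have "\<alpha> * norm (z - p)^2 < \<alpha> * (norm (z - p)^2 + 1)" using a by simp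
    with sq1 show ?thesis by (simp add: pos_divide_less_eq mult.commute)
  qed
  finally have tlt: "t * norm (z - p)^2 < \<alpha>" .
  have pC: "p \<in> C" unfolding p_def by (rule mp_in[OF cl cv ne])
  have "(1 - t) *\<^sub>R p + t *\<^sub>R z \<in> C"
    using convexD[OF cv pC z, of "1 - t" t] t0 t1 by simp
  moreover have "(1 - t) *\<^sub>R p + t *\<^sub>R z = p + t *\<^sub>R (z - p)" by (simp add: algebra_simps)
  ultimately have "p + t *\<^sub>R (z - p) \<in> C" by simp
  hence "norm (x - p) \<le> norm (x - (p + t *\<^sub>R (z - p)))"
    unfolding p_def by (rule mp_min[OF cl cv ne])
  moreover have "x - (p + t *\<^sub>R (z - p)) = (x - p) - t *\<^sub>R (z - p)" by (simp add: algebra_simps)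
  ultimately have "norm (x - p) \<le> norm ((x - p) - t *\<^sub>R (z - p))" by simp
  hence "norm (x - p)^2 \<le> norm ((x - p) - t *\<^sub>R (z - p))^2"
    using norm_ge_zero power_mono by blast
  also have "\<dots> = norm (x - p)^2 - 2 * t * \<alpha> + t^2 * norm (z - p)^2"
    unfolding \<alpha>_def by (simp only: norm_diff_sq[of "x - p" "t *\<^sub>R (z - p)"] norm_scaleR inner_scaleR_right power_mult_distrib power2_abs)
  finally have "2 * t * \<alpha> \<le> t^2 * norm (z - p)^2" by linarith
  hence "t * (2 * \<alpha>) \<le> t * (t * norm (z - p)^2)" by (simp add: power2_eq_square mult.assoc mult.left_commute)
  hence "2 * \<alpha> \<le> t * norm (z - p)^2" using t0 by (rule mult_left_le_imp_le)
  thus False using tlt a by linarith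
qed

lemma mp_vi2:
  fixes C :: "'a::{real_inner,complete_space} set"
  assumes "closed C" "convex C" "C \<noteq> {}" "z \<in> C"
  shows "norm (z - metric_proj C x)^2 \<le> norm (x - z)^2 - norm (x - metric_proj C x)^2"
proof -
  define p where "p = metric_proj C x"
  have vi: "inner (x - p) (z - p) \<le> 0" unfolding p_def by (rule mp_vi[OF assms])
  have "x - z = (x - p) - (z - p)" by simp
  hence "norm (x - z)^2 = norm (x - p)^2 - 2 * inner (x - p) (z - p) + norm (z - p)^2"
    using norm_diff_sq[of "x - p" "z - p"] by simp
  thus ?thesis using vi unfolding p_def[symmetric] by linarith
qed

lemma mp_firm:
  fixes C :: "'a::{real_inner,complete_space} set"
  assumes "closed C" "convex C" "C \<noteq> {}"
  shows "norm (metric_proj C x - metric_proj C y)^2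
         + norm ((x - metric_proj C x) - (y - metric_proj C y))^2 \<le> norm (x - y)^2"
proof -
  define p where "p = metric_proj C x"
  define q where "q = metric_proj C y"
  have pC: "p \<in> C" "q \<in> C" unfolding p_def q_def using mp_in[OF assms] by auto
  have v1: "inner (x - p) (q - p) \<le> 0" unfolding p_def by (rule mp_vi[OF assms pC(2)])
  have v2: "inner (y - q) (p - q) \<le> 0" unfolding q_def by (rule mp_vi[OF assms pC(1)])
  have e1: "inner ((x - p) - (y - q)) (p - q) = - inner (x - p) (q - p) - inner (y - q) (p - q)"
  proof -
    have "inner (x - p) (q - p) = - inner (x - p) (p - q)"
      by (metis inner_minus_right minus_diff_eq)
    thus ?thesis by (simp add: inner_diff_left)
  qed
  have ge: "inner (p - q) ((x - p) - (y - q)) \<ge> 0"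
    using e1 v1 v2 inner_commute[of "p - q" "(x - p) - (y - q)"] by linarith
  have "x - y = (p - q) + ((x - p) - (y - q))" by simp
  hence "norm (x - y)^2 = norm (p - q)^2 + 2 * inner (p - q) ((x - p) - (y - q)) + norm ((x - p) - (y - q))^2"
    using norm_add_sq[of "p - q" "(x - p) - (y - q)"] by simp
  hence "norm (p - q)^2 + norm ((x - p) - (y - q))^2 \<le> norm (x - y)^2" using ge by linarith
  thus ?thesis unfolding p_def q_def .
qed

lemma mp_nonexp:
  fixes C :: "'a::{real_inner,complete_space} set"
  assumes "closed C" "convex C" "C \<noteq> {}"
  shows "norm (metric_proj C x - metric_proj C y) \<le> norm (x - y)"
proof -
  have "norm (metric_proj C x - metric_proj C y)^2 \<le> norm (x - y)^2"
    by (rule order_trans[OF _ mp_firm[OF assms, of x y]]) simp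
  thus ?thesis by (rule power2_le_imp_le) simp
qed

lemma tri:
  fixes x y z :: "'a::real_normed_vector"
  shows "norm (x - z) \<le> norm (x - y) + norm (y - z)"
  using norm_triangle_ineq[of "x - y" "y - z"] by simp

lemma aw_exc_bound:
  fixes C D :: "'a::real_normed_vector set"
  assumes "D \<noteq> {}" "c \<in> C" "norm c \<le> real N"
  shows "infdist c D \<le> aw_exc N C D"
proof -
  obtain d0 where d0: "d0 \<in> D" using assms(1) by blast
  have ne: "C \<inter> cball 0 (real N) \<noteq> {}" using assms(2,3) by auto
  have "bdd_above ((\<lambda>c. infdist c D) ` (C \<inter> cball 0 (real N)))"
  proof (rule bdd_aboveI2)
    fix y assume "y \<in> C \<inter> cball 0 (real N)"
    hence "norm y \<le> real N" by auto
    have "infdist y D \<le> dist y d0" by (rule infdist_le[OF d0])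
    also have "\<dots> \<le> norm y + norm d0" by (simp add: dist_norm norm_triangle_ineq4)
    finally show "infdist y D \<le> real N + norm d0" using \<open>norm y \<le> real N\<close> by linarith
  qed
  hence "infdist c D \<le> (SUP c\<in>C \<inter> cball 0 (real N). infdist c D)"
    by (rule cSUP_upper[rotated]) (use assms in auto)
  thus ?thesis unfolding aw_exc_def using ne by simp
qed

lemma aw_approx:
  fixes C :: "'a::real_normed_vector set"
  assumes aw: "AW_converges Cs C" and ne: "C \<noteq> {}" and nes: "\<And>j. Cs j \<noteq> {}"
    and e: "0 < \<epsilon>"
  shows "\<exists>J. \<forall>j\<ge>J. (\<forall>x\<in>Cs j. norm x \<le> R \<longrightarrow> (\<exists>y\<in>C. dist x y < \<epsilon>))
                 \<and> (\<forall>x\<in>C. norm x \<le> R \<longrightarrow> (\<exists>y\<in>Cs j. dist x y < \<epsilon>))"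
proof -
  define N where "N = nat \<lceil>R\<rceil> + 1"
  have N1: "N \<ge> 1" unfolding N_def by simp
  have RN: "R \<le> real N" unfolding N_def by linarith
  have "(\<lambda>j. aw_h N (Cs j) C) \<longlonglongrightarrow> 0" using aw N1 unfolding AW_converges_def by blast
  hence "eventually (\<lambda>j. aw_h N (Cs j) C < \<epsilon>) sequentially"
    using e by (rule order_tendstoD(2))
  then obtain J where J: "\<And>j. j \<ge> J \<Longrightarrow> aw_h N (Cs j) C < \<epsilon>"
    unfolding eventually_sequentially by blast
  show ?thesis
  proof (intro exI allI impI conjI ballI)
    fix j x assume j: "J \<le> j" and x: "x \<in> Cs j" and nx: "norm x \<le> R"
    have "infdist x C \<le> aw_exc N (Cs j) C" by (rule aw_exc_bound[OF ne x]) (use nx RN in linarith)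
    also have "\<dots> \<le> aw_h N (Cs j) C" unfolding aw_h_def by simp
    finally have "infdist x C < \<epsilon>" using J[OF j] by linarith
    thus "\<exists>y\<in>C. dist x y < \<epsilon>" by (rule infdist_close[OF ne])
  next
    fix j x assume j: "J \<le> j" and x: "x \<in> C" and nx: "norm x \<le> R"
    have "infdist x (Cs j) \<le> aw_exc N C (Cs j)" by (rule aw_exc_bound[OF nes x]) (use nx RN in linarith)
    also have "\<dots> \<le> aw_h N (Cs j) C" unfolding aw_h_def by simp
    finally have "infdist x (Cs j) < \<epsilon>" using J[OF j] by linarith
    thus "\<exists>y\<in>Cs j. dist x y < \<epsilon>" by (rule infdist_close[OF nes])
  qed
qed

lemma proj_conv:
  fixes C :: "'a::{real_inner,complete_space} set"
  assumes aw: "AW_converges Cs C"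
    and c: "closed C" "convex C" "C \<noteq> {}"
    and cs: "\<And>j. closed (Cs j) \<and> convex (Cs j) \<and> Cs j \<noteq> {}"
  shows "(\<lambda>j. metric_proj (Cs j) x) \<longlonglongrightarrow> metric_proj C x"
proof (rule LIMSEQ_I)
  fix \<epsilon> :: real assume e: "0 < \<epsilon>"
  define p where "p = metric_proj C x"
  define \<rho> where "\<rho> = norm (x - p)"
  have pC: "p \<in> C" unfolding p_def by (rule mp_in[OF c])
  have r0: "0 \<le> \<rho>" unfolding \<rho>_def by simp
  define \<tau> where "\<tau> = min 1 (min (\<epsilon>/2) (\<epsilon>^2 / (16 * (\<rho> + 1))))"
  have t0: "0 < \<tau>" unfolding \<tau>_def using e r0 by simp
  have t1: "\<tau> \<le> 1" "\<tau> \<le> \<epsilon>/2" "\<tau> \<le> \<epsilon>^2 / (16 * (\<rho> + 1))" unfolding \<tau>_def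
    by (metis min.cobounded1 min.cobounded2 order_trans)+
  obtain J where J: "\<And>j. j \<ge> J \<Longrightarrow> (\<forall>y\<in>Cs j. norm y \<le> norm x + \<rho> + 2 \<longrightarrow> (\<exists>z\<in>C. dist y z < \<tau>))
                 \<and> (\<forall>y\<in>C. norm y \<le> norm x + \<rho> + 2 \<longrightarrow> (\<exists>z\<in>Cs j. dist y z < \<tau>))"
    using aw_approx[OF aw c(3) _ t0, of "norm x + \<rho> + 2"] cs by blast
  show "\<exists>no. \<forall>j\<ge>no. norm (metric_proj (Cs j) x - metric_proj C x) < \<epsilon>"
  proof (intro exI allI impI)
    fix j assume j: "J \<le> j"
    note csj = cs[of j, THEN conjunct1] cs[of j, THEN conjunct2, THEN conjunct1]
       cs[of j, THEN conjunct2, THEN conjunct2]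
    define pj where "pj = metric_proj (Cs j) x"
    have "norm p \<le> norm x + \<rho> + 2" unfolding \<rho>_def
      using norm_triangle_ineq4[of x p] norm_minus_commute[of x p] norm_triangle_sub[of p x] by linarith
    moreover have J2: "\<forall>y\<in>C. norm y \<le> norm x + \<rho> + 2 \<longrightarrow> (\<exists>z\<in>Cs j. dist y z < \<tau>)"
      using J[OF j] by (rule conjunct2)
    ultimately obtain q where qC: "q \<in> Cs j" and pq: "dist p q < \<tau>" using pC by blast
    have "norm (x - pj) \<le> norm (x - q)" unfolding pj_def by (rule mp_min[OF csj qC])
    also have "\<dots> \<le> norm (x - p) + norm (p - q)" by (rule tri)
    finally have xpj: "norm (x - pj) \<le> \<rho> + \<tau>" using pq unfolding \<rho>_def dist_norm by linarith
    have "norm pj \<le> norm x + norm (x - pj)"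
      using norm_triangle_sub[of pj x] norm_minus_commute[of pj x] by linarith
    hence "norm pj \<le> norm x + \<rho> + 2" using xpj t1 by linarith
    moreover have pjC: "pj \<in> Cs j" unfolding pj_def by (rule mp_in[OF csj])
    moreover have J1: "\<forall>y\<in>Cs j. norm y \<le> norm x + \<rho> + 2 \<longrightarrow> (\<exists>z\<in>C. dist y z < \<tau>)"
      using J[OF j] by (rule conjunct1)
    ultimately obtain z where zC: "z \<in> C" and pjz: "dist pj z < \<tau>" by blast
    have "norm (x - z) \<le> norm (x - pj) + norm (pj - z)" by (rule tri)
    hence xz: "norm (x - z) < \<rho> + 2*\<tau>" using xpj pjz unfolding dist_norm by linarith
    have "norm (z - p)^2 \<le> norm (x - z)^2 - \<rho>^2" unfolding \<rho>_def p_def by (rule mp_vi2[OF c zC])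
    moreover have "norm (x - z)^2 < (\<rho> + 2*\<tau>)^2"
      by (rule power_strict_mono[OF xz]) simp_all
    moreover have "(\<rho> + 2*\<tau>)^2 - \<rho>^2 = 4*(\<tau>*\<rho>) + 4*(\<tau>*\<tau>)" by (simp add: power2_eq_square algebra_simps)
    moreover have "\<tau>*\<tau> \<le> \<tau>" using t0 t1(1) by (simp add: mult_le_cancel_left1)
    moreover have "\<tau> * (16 * (\<rho> + 1)) \<le> \<epsilon>^2"
    proof -
      have "0 < 16 * (\<rho> + 1)" using r0 by simp
      thus ?thesis using t1(3) by (simp add: pos_le_divide_eq)
    qed
    moreover have "\<tau> * (16 * (\<rho> + 1)) = 16*(\<tau>*\<rho>) + 16*\<tau>" by (simp add: algebra_simps)
    ultimately have "norm (z - p)^2 < \<epsilon>^2/4" by linarith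
    hence "norm (z - p)^2 < (\<epsilon>/2)^2" by (simp add: power_divide)
    hence zp: "norm (z - p) < \<epsilon>/2" by (rule power_less_imp_less_base) (use e in simp)
    have "norm (pj - p) \<le> norm (pj - z) + norm (z - p)" by (rule tri)
    hence "norm (pj - p) < \<epsilon>" using pjz zp t1(2) unfolding dist_norm by linarith
    thus "norm (metric_proj (Cs j) x - metric_proj C x) < \<epsilon>" unfolding pj_def p_def .
  qed
qed

lemma aw_ball:
  fixes C :: "'a::{real_inner,complete_space} set"
  assumes aw: "AW_converges Cs C" and ne: "C \<noteq> {}"
    and cs: "\<And>j. closed (Cs j) \<and> convex (Cs j) \<and> Cs j \<noteq> {}"
    and sub: "cball c \<rho> \<subseteq> C" and r: "0 < \<rho>"
  shows "\<exists>J. \<forall>j\<ge>J. cball c (\<rho>/4) \<subseteq> Cs j"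
proof -
  have e: "0 < \<rho>/4" using r by simp
  obtain J where J: "\<And>j. j \<ge> J \<Longrightarrow> (\<forall>x\<in>Cs j. norm x \<le> norm c + \<rho> \<longrightarrow> (\<exists>y\<in>C. dist x y < \<rho>/4))
                 \<and> (\<forall>x\<in>C. norm x \<le> norm c + \<rho> \<longrightarrow> (\<exists>y\<in>Cs j. dist x y < \<rho>/4))"
    using aw_approx[OF aw ne _ e, of "norm c + \<rho>"] cs by blast
  show ?thesis
  proof (intro exI allI impI subsetI)
    fix j y assume j: "J \<le> j" and y: "y \<in> cball c (\<rho>/4)"
    note csj = cs[of j, THEN conjunct1] cs[of j, THEN conjunct2, THEN conjunct1]
       cs[of j, THEN conjunct2, THEN conjunct2]
    have J2: "\<forall>x\<in>C. norm x \<le> norm c + \<rho> \<longrightarrow> (\<exists>y\<in>Cs j. dist x y < \<rho>/4)"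
      using J[OF j] by (rule conjunct2)
    show "y \<in> Cs j"
    proof (rule ccontr)
      assume yn: "y \<notin> Cs j"
      define p where "p = metric_proj (Cs j) y"
      have pC: "p \<in> Cs j" unfolding p_def by (rule mp_in[OF csj])
      define v where "v = y - p"
      define k where "k = norm v"
      have k0: "0 < k" unfolding k_def v_def using yn pC by auto
      define w where "w = y + (\<rho> / (2*k)) *\<^sub>R v"
      have "norm ((\<rho> / (2*k)) *\<^sub>R v) = \<rho>/2" using k0 r unfolding k_def by simp
      moreover have "dist c y \<le> \<rho>/4" using y by simp
      moreover have "dist c w \<le> dist c y + norm ((\<rho> / (2*k)) *\<^sub>R v)"
        unfolding w_def dist_norm using tri[of c "y + (\<rho> / (2*k)) *\<^sub>R v" y] by simp
      ultimately have "dist c w \<le> \<rho>" using r by linarith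
      hence wC: "w \<in> C" using sub by auto
      have "norm w \<le> norm c + dist c w" using norm_triangle_sub[of w c] by (simp add: dist_norm norm_minus_commute)
      hence "norm w \<le> norm c + \<rho>" using \<open>dist c w \<le> \<rho>\<close> by linarith
      then obtain z where zC: "z \<in> Cs j" and wz: "dist w z < \<rho>/4" using J2 wC by blast
      have vi: "inner v (z - p) \<le> 0" unfolding v_def p_def by (rule mp_vi[OF csj zC])
      have "inner v (w - z) = inner v (y - p) - inner v (z - p) + (\<rho> / (2*k)) * inner v v"
        unfolding w_def by (simp add: inner_diff_right inner_add_right algebra_simps)
      moreover have "inner v (y - p) = k^2" unfolding k_def v_def by (simp add: power2_norm_eq_inner)
      moreover have "(\<rho> / (2*k)) * inner v v = k * (\<rho>/2)"
      proof -
        have "inner v v = k^2" unfolding k_def by (simp add: power2_norm_eq_inner)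
        thus ?thesis using k0 by (simp add: power2_eq_square field_simps)
      qed
      ultimately have "inner v (w - z) \<ge> k * (\<rho>/2)" using vi zero_le_power2[of k] by linarith
      moreover have "inner v (w - z) \<le> k * norm (w - z)" unfolding k_def by (rule norm_cauchy_schwarz)
      ultimately have "k * (\<rho>/2) \<le> k * norm (w - z)" by linarith
      hence "\<rho>/2 \<le> norm (w - z)" using k0 by simp
      thus False using wz r by (simp add: dist_norm)
    qed
  qed
qed

lemma step_ball:
  fixes C :: "'a::{real_inner,complete_space} set"
  assumes cs: "closed C" "convex C" "C \<noteq> {}"
    and sub: "cball c r \<subseteq> C" and r: "0 \<le> r"
  shows "norm (metric_proj C x - c)^2 + 2 * r * norm (x - metric_proj C x) \<le> norm (x - c)^2"
proof -
  define p where "p = metric_proj C x"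
  define k where "k = norm (x - p)"
  show ?thesis
  proof (cases "k = 0")
    case True
    hence "x = p" unfolding k_def by simp
    thus ?thesis using True unfolding p_def k_def by simp
  next
    case False
    hence k0: "0 < k" unfolding k_def by simp
    define z where "z = c + (r / k) *\<^sub>R (x - p)"
    have "dist c z = r" unfolding z_def dist_norm k_def[symmetric] using k0 r
      by (simp add: k_def)
    hence "z \<in> C" using sub by auto
    hence vi: "inner (x - p) (z - p) \<le> 0" unfolding p_def by (rule mp_vi[OF cs])
    have "inner (x - p) (z - p) = inner (x - p) (c - p) + (r / k) * inner (x - p) (x - p)"
      unfolding z_def by (simp add: inner_diff_right inner_add_right algebra_simps)
    moreover have "inner (x - p) (x - p) = k^2" unfolding k_def by (simp add: power2_norm_eq_inner)
    moreover have "(r / k) * k^2 = r * k" using k0 by (simp add: power2_eq_square field_simps)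
    ultimately have i1: "inner (x - p) (p - c) \<ge> r * k"
      using vi inner_minus_right[of "x - p" "c - p"] by (simp add: minus_diff_eq) 
    have "x - c = (x - p) + (p - c)" by simp
    hence "norm (x - c)^2 = k^2 + 2 * inner (x - p) (p - c) + norm (p - c)^2"
      using norm_add_sq[of "x - p" "p - c"] unfolding k_def by simp
    hence "norm (p - c)^2 + 2 * r * k \<le> norm (x - c)^2" using i1 zero_le_power2[of k] by linarith
    thus ?thesis unfolding p_def k_def .
  qed
qed

lemma slater:
  fixes A B :: "'a::real_normed_vector set"
  assumes cvB: "convex B" and iB: "interior B \<noteq> {}" and iAB: "interior A \<inter> B \<noteq> {}"
  shows "\<exists>c \<rho>. 0 < \<rho> \<and> cball c \<rho> \<subseteq> A \<and> cball c \<rho> \<subseteq> B"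
proof -
  obtain p where pA: "p \<in> interior A" and pB: "p \<in> B" using iAB by blast
  obtain r0 where r0: "0 < r0" "ball p r0 \<subseteq> A" using pA mem_interior by blast
  obtain q where "q \<in> interior B" using iB by blast
  then obtain r1 where r1: "0 < r1" "ball q r1 \<subseteq> B" using mem_interior by blast
  define t where "t = min (1/2) (r0 / (2*(norm (q - p) + 1)))"
  have np: "0 < norm (q - p) + 1" by (simp add: add_nonneg_pos)
  have t0: "0 < t" unfolding t_def using r0 np by simp
  have t1: "t \<le> 1/2" unfolding t_def by (rule min.cobounded1)
  have "t \<le> r0 / (2*(norm (q - p) + 1))" unfolding t_def by (rule min.cobounded2)
  hence "t * (2*(norm (q - p) + 1)) \<le> r0" using np by (simp add: pos_le_divide_eq)
  hence t2: "t * norm (q - p) \<le> r0/2" using t0 by (simp add: algebra_simps)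
  define c where "c = p + t *\<^sub>R (q - p)"
  define \<rho> where "\<rho> = min (r0/4) (t*r1/2)"
  have rho0: "0 < \<rho>" unfolding \<rho>_def using r0 r1 t0 by simp
  have rho1: "\<rho> \<le> r0/4" "\<rho> \<le> t*r1/2" unfolding \<rho>_def by simp_all
  have "cball c \<rho> \<subseteq> A \<and> cball c \<rho> \<subseteq> B"
  proof (intro conjI subsetI)
    fix y assume "y \<in> cball c \<rho>"
    hence yc: "norm (y - c) \<le> \<rho>" by (simp add: dist_norm norm_minus_commute)
    have "norm (c - p) = t * norm (q - p)" unfolding c_def using t0 by simp
    hence "norm (y - p) \<le> \<rho> + t * norm (q - p)" using tri[of y p c] yc by linarith
    hence "norm (y - p) < r0" using rho1 t2 r0 by linarith
    hence "y \<in> ball p r0" by (simp add: dist_norm norm_minus_commute)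
    thus "y \<in> A" using r0 by blast
  next
    fix y assume "y \<in> cball c \<rho>"
    hence yc: "norm (y - c) \<le> \<rho>" by (simp add: dist_norm norm_minus_commute)
    define q' where "q' = q + (1/t) *\<^sub>R (y - c)"
    have "norm (q' - q) = norm (y - c) / t" unfolding q'_def using t0 by simp
    also have "\<dots> \<le> \<rho> / t" using yc t0 by (simp add: divide_right_mono)
    also have "\<dots> \<le> r1/2" using rho1(2) t0 by (simp add: pos_divide_le_eq mult.commute)
    finally have "norm (q' - q) < r1" using r1 by linarith
    hence "q' \<in> ball q r1" by (simp add: dist_norm norm_minus_commute)
    hence q'B: "q' \<in> B" using r1 by blast
    have "(1 - t) *\<^sub>R p + t *\<^sub>R q' \<in> B"
      using convexD[OF cvB pB q'B, of "1 - t" t] t0 t1 by simp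
    moreover have "(1 - t) *\<^sub>R p + t *\<^sub>R q' = y"
      unfolding q'_def c_def using t0 by (simp add: algebra_simps)
    ultimately show "y \<in> B" by simp
  qed
  thus ?thesis using rho0 by blast
qed

lemma cauchy_steps:
  fixes x :: "nat \<Rightarrow> 'a::real_normed_vector"
  assumes sg: "summable g" and st: "\<And>i. norm (x (Suc i) - x i) \<le> g i"
  shows "Cauchy x"
proof -
  define S where "S k = (\<Sum>i<k. g i)" for k
  have mn: "norm (x n - x m) \<le> S n - S m" if "m \<le> n" for m n
    using that
  proof (induction n rule: dec_induct)
    case base then show ?case by simp
  next
    case (step n)
    have "norm (x (Suc n) - x m) \<le> norm (x (Suc n) - x n) + norm (x n - x m)" by (rule tri)
    also have "\<dots> \<le> g n + (S n - S m)" using st[of n] step.IH by linarith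
    also have "\<dots> = S (Suc n) - S m" unfolding S_def by simp
    finally show ?case .
  qed
  have "convergent S" unfolding S_def using summable_LIMSEQ[OF sg] convergent_def by blast
  hence CS: "Cauchy S" by (rule convergent_Cauchy)
  show "Cauchy x"
  proof (rule metric_CauchyI)
    fix e :: real assume e: "0 < e"
    obtain M where M: "\<And>m n. m \<ge> M \<Longrightarrow> n \<ge> M \<Longrightarrow> dist (S m) (S n) < e"
      using metric_CauchyD[OF CS e] by blast
    show "\<exists>M. \<forall>m\<ge>M. \<forall>n\<ge>M. dist (x m) (x n) < e"
    proof (intro exI allI impI)
      fix m n assume m: "M \<le> m" and n: "M \<le> n"
      show "dist (x m) (x n) < e"
      proof (cases "m \<le> n")
        case True
        have "norm (x n - x m) \<le> S n - S m" by (rule mn[OF True])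
        moreover have "S n - S m < e" using M[OF m n] by (simp add: dist_real_def)
        ultimately show ?thesis by (simp add: dist_norm norm_minus_commute)
      next
        case False
        have "norm (x m - x n) \<le> S m - S n" using False by (intro mn) simp
        moreover have "S m - S n < e" using M[OF m n] by (simp add: dist_real_def)
        ultimately show ?thesis by (simp add: dist_norm)
      qed
    qed
  qed
qed

lemma caseA:
  fixes A B :: "'a::{real_inner,complete_space} set"
  assumes nA: "A \<noteq> {}" and nB: "B \<noteq> {}"
    and cA: "cball c \<rho> \<subseteq> A" and cB: "cball c \<rho> \<subseteq> B" and r: "0 < \<rho>"
    and As: "\<And>n. closed (As n) \<and> convex (As n) \<and> As n \<noteq> {}"
    and Bs: "\<And>n. closed (Bs n) \<and> convex (Bs n) \<and> Bs n \<noteq> {}"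
    and awA: "AW_converges As A" and awB: "AW_converges Bs B"
    and rec: "\<And>n. b (Suc n) = metric_proj (Bs (Suc n)) (a n) \<and> a (Suc n) = metric_proj (As (Suc n)) (b (Suc n))"
  shows "convergent a \<and> convergent b"
proof -
  obtain J1 where J1: "\<And>j. j \<ge> J1 \<Longrightarrow> cball c (\<rho>/4) \<subseteq> As j" using aw_ball[OF awA nA As cA r] by blast
  obtain J2 where J2: "\<And>j. j \<ge> J2 \<Longrightarrow> cball c (\<rho>/4) \<subseteq> Bs j" using aw_ball[OF awB nB Bs cB r] by blast
  define J where "J = max J1 J2"
  define r' where "r' = \<rho>/4"
  have r'0: "0 < r'" unfolding r'_def using r by simp
  define \<phi> where "\<phi> n = norm (a n - c)^2" for n
  define \<delta> where "\<delta> n = norm (a n - b (Suc n)) + norm (b (Suc n) - a (Suc n))" for n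
  have dec: "\<phi> (Suc n) + 2 * r' * \<delta> n \<le> \<phi> n" if n: "n \<ge> J" for n
  proof -
    have sA: "cball c r' \<subseteq> As (Suc n)" unfolding r'_def using J1 n unfolding J_def by simp
    have sB: "cball c r' \<subseteq> Bs (Suc n)" unfolding r'_def using J2 n unfolding J_def by simp
    note AsS = As[of "Suc n", THEN conjunct1] As[of "Suc n", THEN conjunct2, THEN conjunct1]
       As[of "Suc n", THEN conjunct2, THEN conjunct2]
    note BsS = Bs[of "Suc n", THEN conjunct1] Bs[of "Suc n", THEN conjunct2, THEN conjunct1]
       Bs[of "Suc n", THEN conjunct2, THEN conjunct2]
    have s1: "norm (b (Suc n) - c)^2 + 2 * r' * norm (a n - b (Suc n)) \<le> norm (a n - c)^2"
      using step_ball[OF BsS sB, of "a n"] r'0 rec[of n] by simp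
    have s2: "norm (a (Suc n) - c)^2 + 2 * r' * norm (b (Suc n) - a (Suc n)) \<le> norm (b (Suc n) - c)^2"
      using step_ball[OF AsS sA, of "b (Suc n)"] r'0 rec[of n] by simp
    show ?thesis unfolding \<phi>_def \<delta>_def using s1 s2 by (simp add: algebra_simps)
  qed
  have dnn: "0 \<le> \<delta> n" for n unfolding \<delta>_def by simp
  have pnn: "0 \<le> \<phi> n" for n unfolding \<phi>_def by simp
  have tel: "\<phi> (J + k) + 2 * r' * (\<Sum>i<k. \<delta> (J + i)) \<le> \<phi> J" for k
  proof (induction k)
    case 0 show ?case by simp
  next
    case (Suc k)
    have "\<phi> (Suc (J + k)) + 2 * r' * \<delta> (J + k) \<le> \<phi> (J + k)" by (rule dec) simp
    thus ?case using Suc.IH by (simp add: algebra_simps)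
  qed
  have bnd: "(\<Sum>i<k. \<delta> (J + i)) \<le> \<phi> J / (2 * r')" for k
  proof -
    have "2 * r' * (\<Sum>i<k. \<delta> (J + i)) \<le> \<phi> J" using tel[of k] pnn[of "J + k"] by linarith
    thus ?thesis using r'0 by (simp add: pos_le_divide_eq mult.commute)
  qed
  have sumd: "summable (\<lambda>i. \<delta> (J + i))"
  proof (rule bounded_imp_summable)
    show "0 \<le> \<delta> (J + n)" for n by (rule dnn)
    show "(\<Sum>k\<le>n. \<delta> (J + k)) \<le> \<phi> J / (2 * r')" for n
      using bnd[of "Suc n"] by (simp add: lessThan_Suc_atMost)
  qed
  have dn: "norm (a (Suc i + J) - a (i + J)) \<le> \<delta> (J + i)" for i
  proof -
    have "norm (a (Suc (J + i)) - a (J + i)) \<le> norm (a (J + i) - b (Suc (J + i))) + norm (b (Suc (J + i)) - a (Suc (J + i)))"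
      using tri[of "a (Suc (J + i))" "a (J + i)" "b (Suc (J + i))"]
      by (simp add: norm_minus_commute add.commute)
    thus ?thesis unfolding \<delta>_def by (simp add: add.commute)
  qed
  have "Cauchy (\<lambda>k. a (k + J))" by (rule cauchy_steps[OF sumd]) (use dn in simp)
  then obtain L where "(\<lambda>k. a (k + J)) \<longlonglongrightarrow> L" using Cauchy_convergent_iff convergent_def by blast
  hence alim: "a \<longlonglongrightarrow> L" by (rule LIMSEQ_offset)
  have "(\<lambda>i. \<delta> (J + i)) \<longlonglongrightarrow> 0" using sumd by (rule summable_LIMSEQ_zero)
  hence "(\<lambda>k. norm (b (Suc (k + J)) - a (k + J))) \<longlonglongrightarrow> 0"
  proof (rule Lim_null_comparison[rotated])
    show "\<forall>\<^sub>F k in sequentially. norm (norm (b (Suc (k + J)) - a (k + J))) \<le> \<delta> (J + k)"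
      unfolding \<delta>_def by (simp add: norm_minus_commute add.commute)
  qed
  hence "(\<lambda>k. b (Suc (k + J)) - a (k + J)) \<longlonglongrightarrow> 0" by (simp add: tendsto_norm_zero_iff)
  moreover have "(\<lambda>k. a (k + J)) \<longlonglongrightarrow> L" using alim by (rule LIMSEQ_ignore_initial_segment)
  ultimately have "(\<lambda>k. (b (Suc (k + J)) - a (k + J)) + a (k + J)) \<longlonglongrightarrow> 0 + (L)"
    by (rule tendsto_add)
  hence "(\<lambda>k. b (k + Suc J)) \<longlonglongrightarrow> L" by simp
  hence "b \<longlonglongrightarrow> L" by (rule LIMSEQ_offset)
  thus ?thesis using alim unfolding convergent_def by blast
qed

lemma ball_lemma:
  fixes A B :: "'a::real_normed_vector set"
  assumes dA: "\<And>a b. a \<in> A \<Longrightarrow> b \<in> B \<Longrightarrow> d \<le> norm (a - b)"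
    and dis: "interior A \<inter> B = {}" and sub: "ball m \<rho> \<subseteq> A" and r: "0 < \<rho>" and bB: "b \<in> B"
  shows "\<rho> + d \<le> norm (m - b)"
proof (rule ccontr)
  assume H: "\<not> ?thesis"
  define k where "k = norm (m - b)"
  have mA: "m \<in> A" using sub r by auto
  have kd: "d \<le> k" unfolding k_def by (rule dA[OF mA bB])
  have "ball m \<rho> \<subseteq> interior A" using sub by (simp add: interior_maximal)
  hence "b \<notin> ball m \<rho>" using dis bB by blast
  hence kr: "\<rho> \<le> k" unfolding k_def by (simp add: dist_norm)
  define \<rho>' where "\<rho>' = (\<rho> + (k - d)) / 2"
  have r1: "0 < \<rho>'" "\<rho>' < \<rho>" "k - d < \<rho>'" using H kd r unfolding \<rho>'_def k_def by auto
  have k0: "0 < k" using kr r by linarith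
  define m' where "m' = m + (\<rho>' / k) *\<^sub>R (b - m)"
  have "dist m m' = \<rho>'" unfolding m'_def dist_norm using k0 r1
    by (simp add: k_def norm_minus_commute)
  hence "m' \<in> A" using sub r1 by auto
  hence "d \<le> norm (m' - b)" using dA bB by blast
  moreover have "m' - b = (1 - \<rho>' / k) *\<^sub>R (m - b)" unfolding m'_def by (simp add: algebra_simps)
  hence "norm (m' - b) = (1 - \<rho>' / k) * k" using k0 r1 kr unfolding k_def by simp
  hence "norm (m' - b) = k - \<rho>'" using k0 by (simp add: algebra_simps)
  ultimately show False using r1 by linarith
qed

lemma W_lemma:
  fixes A B :: "'a::real_normed_vector set"
  assumes dA: "\<And>a b. a \<in> A \<Longrightarrow> b \<in> B \<Longrightarrow> d \<le> norm (a - b)"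
    and dis: "interior A \<inter> B = {}" and cvA: "convex A" and cvB: "convex B"
    and eA: "e \<in> A" and fB: "f \<in> B" and ef: "norm (e - f) = d"
    and lur: "LUR_point A e" and eps: "0 < \<epsilon>"
  shows "\<exists>\<eta>>0. \<forall>a\<in>A. \<forall>b\<in>B. norm (a - b) < d + \<eta> \<longrightarrow> norm (a - e) < \<epsilon>"
proof -
  obtain \<delta> where d0: "0 < \<delta>" and dl: "\<And>y. y \<in> A \<Longrightarrow> infdist ((1/2) *\<^sub>R (e + y)) (frontier A) < \<delta> \<Longrightarrow> norm (e - y) < \<epsilon>"
    using lur eps unfolding LUR_point_def by blast
  show ?thesis
  proof (intro exI conjI ballI impI)
    show "0 < 2 * \<delta>" using d0 by simp
    fix a b assume aA: "a \<in> A" and bB: "b \<in> B" and ab: "norm (a - b) < d + 2 * \<delta>"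
    define m where "m = (1/2) *\<^sub>R (e + a)"
    define b' where "b' = (1/2) *\<^sub>R (f + b)"
    have mA: "m \<in> A" unfolding m_def using convexD[OF cvA eA aA, of "1/2" "1/2"] by (simp add: scaleR_right_distrib)
    have bB': "b' \<in> B" unfolding b'_def using convexD[OF cvB fB bB, of "1/2" "1/2"] by (simp add: scaleR_right_distrib)
    have "m - b' = (1/2) *\<^sub>R ((e - f) + (a - b))" unfolding m_def b'_def by (simp add: algebra_simps)
    hence "norm (m - b') = (1/2) * norm ((e - f) + (a - b))" by simp
    also have "\<dots> \<le> (1/2) * (norm (e - f) + norm (a - b))" by (simp add: norm_triangle_ineq)
    also have "\<dots> = norm (e - f)/2 + norm (a - b)/2" by simp
    finally have mb: "norm (m - b') < d + \<delta>" using ef ab by linarith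
    have "infdist m (frontier A) < \<delta>"
    proof (rule ccontr)
      assume "\<not> ?thesis"
      hence fd: "\<delta> \<le> infdist m (frontier A)" by simp
      have "ball m \<delta> \<subseteq> A"
      proof
        fix y assume y: "y \<in> ball m \<delta>"
        show "y \<in> A"
        proof (rule ccontr)
          assume "y \<notin> A"
          hence "ball m \<delta> - A \<noteq> {}" using y by blast
          moreover have "m \<in> ball m \<delta> \<inter> A" using mA d0 by simp
          hence "ball m \<delta> \<inter> A \<noteq> {}" by blast
          ultimately have "ball m \<delta> \<inter> frontier A \<noteq> {}"
            using connected_Int_frontier[of "ball m \<delta>" A] by simp
          then obtain w where w: "w \<in> ball m \<delta>" "w \<in> frontier A" by blast
          have "infdist m (frontier A) \<le> dist m w" by (rule infdist_le[OF w(2)])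
          thus False using w(1) fd by simp
        qed
      qed
      hence "\<delta> + d \<le> norm (m - b')" using ball_lemma[of A B d m \<delta> b'] dA dis d0 bB' by blast
      thus False using mb by linarith
    qed
    hence "norm (e - a) < \<epsilon>" using dl[OF aA] unfolding m_def by blast
    thus "norm (a - e) < \<epsilon>" by (simp add: norm_minus_commute)
  qed
qed

lemma geometry:
  fixes A B :: "'a::{real_inner,complete_space} set"
  assumes bA: "body A" and bB: "body B" and lur: "LUR A" and eE: "e \<in> best_A A B"
    and dis: "interior A \<inter> B = {}"
  shows "(\<forall>a\<in>A. \<forall>b\<in>B. set_dist A B \<le> norm (a - b))
     \<and> e \<in> A \<and> norm (e - metric_proj B e) = set_dist A B \<and> metric_proj A (metric_proj B e) = e
     \<and> (\<forall>\<epsilon>>0. \<exists>\<eta>>0. \<forall>a\<in>A. \<forall>b\<in>B. norm (a - b) < set_dist A B + \<eta> \<longrightarrow> norm (a - e) < \<epsilon>)"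
proof -
  define d where "d = set_dist A B"
  have cA: "closed A" "convex A" "A \<noteq> {}" using bA unfolding body_def by auto
  have cB: "closed B" "convex B" "B \<noteq> {}" using bB unfolding body_def by auto
  have dA: "d \<le> norm (a - b)" if "a \<in> A" "b \<in> B" for a b
  proof -
    have "d \<le> infdist a B" unfolding d_def set_dist_def
      by (rule cINF_lower[OF _ that(1)]) (auto intro: bdd_belowI[of _ 0] infdist_nonneg)
    also have "\<dots> \<le> dist a b" by (rule infdist_le[OF that(2)])
    finally show ?thesis by (simp add: dist_norm)
  qed
  have eA: "e \<in> A" and eB: "infdist e B = d" using eE unfolding best_A_def d_def by auto
  define f where "f = metric_proj B e"
  have fB: "f \<in> B" unfolding f_def by (rule mp_in[OF cB])
  have ef: "norm (e - f) = d" unfolding f_def using mp_infdist[OF cB, of e] eB by simp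
  have pf: "metric_proj A f = e"
  proof -
    have pA: "metric_proj A f \<in> A" by (rule mp_in[OF cA])
    have "norm (e - metric_proj A f)^2 \<le> norm (f - e)^2 - norm (f - metric_proj A f)^2"
      by (rule mp_vi2[OF cA eA])
    moreover have "d \<le> norm (f - metric_proj A f)" using dA[OF pA fB] by (simp add: norm_minus_commute)
    moreover have "0 \<le> d" using ef by (metis norm_ge_zero)
    ultimately have "norm (e - metric_proj A f)^2 \<le> 0" using ef
      by (smt (verit, best) norm_minus_commute power_mono)
    thus ?thesis by simp
  qed
  have "e \<notin> interior A"
  proof
    assume "e \<in> interior A"
    then obtain \<rho> where r: "0 < \<rho>" "ball e \<rho> \<subseteq> A" using mem_interior by blast
    have "\<rho> + d \<le> norm (e - f)" using ball_lemma[of A B d e \<rho> f] dA dis r fB by blast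
    thus False using ef r by linarith
  qed
  hence "e \<in> frontier A" using eA cA(1) by (simp add: frontier_def)
  hence lp: "LUR_point A e" using lur unfolding LUR_def by blast
  have W: "\<forall>\<epsilon>>0. \<exists>\<eta>>0. \<forall>a\<in>A. \<forall>b\<in>B. norm (a - b) < d + \<eta> \<longrightarrow> norm (a - e) < \<epsilon>"
    using W_lemma[OF dA dis cA(2) cB(2) eA fB ef lp] by blast
  show ?thesis using dA eA ef pf W unfolding d_def f_def by blast
qed

lemma real_contr:
  fixes s p X Y \<epsilon> c r :: real
  assumes r: "0 < r" "r \<le> s" and e: "0 \<le> \<epsilon>" "\<epsilon> \<le> r" "\<epsilon> \<le> c^2 * r / 4"
    and Y: "0 \<le> Y" "s \<le> Y + \<epsilon>" and XY: "Y^2 + X^2 \<le> p^2" and cX: "c * s \<le> X" and c: "0 \<le> c"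
  shows "s^2 * (1 + c^2/2) \<le> p^2"
proof -
  have s0: "0 \<le> s" using r by linarith
  have "0 \<le> c * s" using c s0 by simp
  hence X2: "(c * s)^2 \<le> X^2" using cX by (intro power_mono) auto
  have "0 \<le> s - \<epsilon>" using r e by linarith
  hence Y2: "(s - \<epsilon>)^2 \<le> Y^2" using Y by (intro power_mono) auto
  have "(s - \<epsilon>)^2 = s^2 - 2 * \<epsilon> * s + \<epsilon>^2" by (simp add: power2_eq_square algebra_simps)
  hence sq: "s^2 - 2 * \<epsilon> * s \<le> (s - \<epsilon>)^2" using zero_le_power2[of \<epsilon>] by linarith
  have "2 * \<epsilon> \<le> 2 * (c^2 * r / 4)" using e(3) by linarith
  hence "2 * \<epsilon> * s \<le> 2 * (c^2 * r / 4) * s" using s0 by (rule mult_right_mono)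
  also have "\<dots> = (c^2/2) * (r * s)" by (simp add: algebra_simps)
  also have "\<dots> \<le> (c^2/2) * (s * s)" using r s0 by (intro mult_left_mono mult_right_mono) auto
  finally have es: "2 * \<epsilon> * s \<le> (c^2/2) * s^2" by (simp add: power2_eq_square)
  have cs: "(c * s)^2 = c^2 * s^2" by (simp add: power_mult_distrib)
  have "s^2 * (1 + c^2/2) = s^2 - (c^2/2) * s^2 + c^2 * s^2" by (simp add: algebra_simps)
  thus ?thesis using X2 Y2 sq es cs XY by linarith
qed

lemma iterate_bound:
  fixes u :: "nat \<Rightarrow> real"
  assumes q: "1 \<le> q" and st: "\<And>k. u (Suc k) \<le> max R (u k / q)" and R: "0 \<le> R"
  shows "u k \<le> max R (u 0 / q^k)"
proof (induction k)
  case 0 show ?case by simp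
next
  case (Suc k)
  have q0: "0 < q" using q by simp
  have "u (Suc k) \<le> max R (u k / q)" by (rule st)
  also have "u k / q \<le> max R (u 0 / q^k) / q" using Suc.IH q0 by (simp add: divide_right_mono)
  hence "max R (u k / q) \<le> max R (max R (u 0 / q^k) / q)" by simp
  also have "max R (u 0 / q^k) / q = max (R / q) (u 0 / q^(Suc k))" using q0
    by (simp add: max_divide_distrib_right field_simps)
  also have "max R (max (R / q) (u 0 / q^(Suc k))) \<le> max R (u 0 / q^(Suc k))"
  proof -
    have "R \<le> R * q" using R q mult_left_mono[of 1 q R] by simp
    hence "R / q \<le> R" using q0 by (simp add: divide_le_eq)
    thus ?thesis by simp
  qed
  finally show ?case .
qed

lemma K_lemma:
  fixes A B :: "'a::{real_inner,complete_space} set"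
  assumes nA: "A \<noteq> {}" and nB: "B \<noteq> {}"
    and As: "\<And>n. closed (As n) \<and> convex (As n) \<and> As n \<noteq> {}"
    and Bs: "\<And>n. closed (Bs n) \<and> convex (Bs n) \<and> Bs n \<noteq> {}"
    and awA: "AW_converges As A" and awB: "AW_converges Bs B"
    and W: "\<forall>\<epsilon>>0. \<exists>\<eta>>0. \<forall>a\<in>A. \<forall>b\<in>B. norm (a - b) < d + \<eta> \<longrightarrow> norm (a - e) < \<epsilon>"
    and nv: "norm v = d"
    and \<rho>A: "\<And>n. \<rho> n \<in> As n" and gB: "\<And>n. g n \<in> Bs n"
    and \<rho>l: "\<rho> \<longlonglongrightarrow> e" and wl: "(\<lambda>n. g n - \<rho> n) \<longlonglongrightarrow> v"
    and r: "0 < r"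
  shows "\<exists>c>0. \<exists>N. \<forall>n\<ge>N. \<forall>x\<in>As n. \<forall>y\<in>Bs n. r \<le> norm (x - e) \<longrightarrow> c * norm (x - e) \<le> norm ((y - x) - v)"
proof -
  have r8: "0 < r/8" using r by simp
  obtain \<eta>0 where \<eta>0: "0 < \<eta>0" and W0: "\<And>a b. a \<in> A \<Longrightarrow> b \<in> B \<Longrightarrow> norm (a - b) < d + \<eta>0 \<Longrightarrow> norm (a - e) < r/8"
    using W r8 by blast
  define \<eta> where "\<eta> = min \<eta>0 1"
  have h0: "0 < \<eta>" "\<eta> \<le> \<eta>0" "\<eta> \<le> 1" unfolding \<eta>_def using \<eta>0 by auto
  define c where "c = \<eta> / (2*r)"
  have c0: "0 < c" unfolding c_def using h0 r by simp
  have cr: "c * (2*r/3) = \<eta>/3" unfolding c_def using r by (simp add: field_simps)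
  define \<tau> where "\<tau> = min (r/16) (\<eta>/16)"
  have t0: "0 < \<tau>" "\<tau> \<le> r/16" "\<tau> \<le> \<eta>/16" unfolding \<tau>_def using r h0 by auto
  define R where "R = norm e + r + d + 2"
  obtain N1 where N1: "\<And>n. n \<ge> N1 \<Longrightarrow> norm (\<rho> n - e) < r/4"
    using LIMSEQ_D[OF \<rho>l, of "r/4"] r by auto
  obtain N2 where N2: "\<And>n. n \<ge> N2 \<Longrightarrow> norm ((g n - \<rho> n) - v) < \<eta>/4"
    using LIMSEQ_D[OF wl, of "\<eta>/4"] h0 by auto
  obtain N3 where N3: "\<And>j. j \<ge> N3 \<Longrightarrow> (\<forall>x\<in>As j. norm x \<le> R \<longrightarrow> (\<exists>y\<in>A. dist x y < \<tau>))
                 \<and> (\<forall>x\<in>A. norm x \<le> R \<longrightarrow> (\<exists>y\<in>As j. dist x y < \<tau>))"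
    using aw_approx[OF awA nA _ t0(1), of R] As by blast
  obtain N4 where N4: "\<And>j. j \<ge> N4 \<Longrightarrow> (\<forall>x\<in>Bs j. norm x \<le> R \<longrightarrow> (\<exists>y\<in>B. dist x y < \<tau>))
                 \<and> (\<forall>x\<in>B. norm x \<le> R \<longrightarrow> (\<exists>y\<in>Bs j. dist x y < \<tau>))"
    using aw_approx[OF awB nB _ t0(1), of R] Bs by blast
  define N where "N = max (max N1 N2) (max N3 N4)"
  have "\<forall>n\<ge>N. \<forall>x\<in>As n. \<forall>y\<in>Bs n. r \<le> norm (x - e) \<longrightarrow> c * norm (x - e) \<le> norm ((y - x) - v)"
  proof (intro allI impI ballI)
    fix n x y assume n: "N \<le> n" and xA: "x \<in> As n" and yB: "y \<in> Bs n" and rs: "r \<le> norm (x - e)"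
    have n1: "N1 \<le> n" "N2 \<le> n" "N3 \<le> n" "N4 \<le> n" using n unfolding N_def by auto
    note AsN = As[of n, THEN conjunct2, THEN conjunct1]
    note BsN = Bs[of n, THEN conjunct2, THEN conjunct1]
    define s where "s = norm (x - e)"
    define \<sigma> where "\<sigma> = norm ((y - x) - v)"
    show "c * norm (x - e) \<le> norm ((y - x) - v)"
    proof (rule ccontr)
      assume "\<not> ?thesis"
      hence sig: "\<sigma> < c * s" unfolding s_def \<sigma>_def by simp
      have rs': "r \<le> s" using rs unfolding s_def .
      have re: "norm (\<rho> n - e) < r/4" by (rule N1[OF n1(1)])
      define D0 where "D0 = norm (x - \<rho> n)"
      have "s \<le> D0 + norm (\<rho> n - e)" unfolding s_def D0_def by (rule tri)
      hence D0s: "3 * s / 4 \<le> D0" using re rs' by linarith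
      have D00: "0 < D0" using D0s rs' r by linarith
      define t where "t = (r/2) / D0"
      have t0': "0 < t" unfolding t_def using r D00 by simp
      have "r/2 \<le> (2/3) * D0" using D0s rs' by linarith
      hence t23: "t \<le> 2/3" unfolding t_def using D00 by (simp add: divide_le_eq)
      have "t * s \<le> 2*r/3"
      proof -
        have "t * s = (r/2) * (s / D0)" unfolding t_def by simp
        moreover have "s / D0 \<le> 4/3" using D0s D00 by (simp add: divide_le_eq)
        moreover have "(r/2) * (s / D0) \<le> (r/2) * (4/3)" using r \<open>s / D0 \<le> 4/3\<close> by (intro mult_left_mono) auto
        ultimately show ?thesis by simp
      qed
      hence "c * (t * s) \<le> c * (2*r/3)" using c0 by (intro mult_left_mono) auto
      hence tcs: "t * (c * s) \<le> \<eta>/3" using cr by (simp add: mult.left_commute)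
      define a' where "a' = (1 - t) *\<^sub>R \<rho> n + t *\<^sub>R x"
      define b' where "b' = (1 - t) *\<^sub>R g n + t *\<^sub>R y"
      have a'A: "a' \<in> As n" unfolding a'_def using convexD[OF AsN \<rho>A xA, of "1 - t" t] t0' t23 by simp
      have b'B: "b' \<in> Bs n" unfolding b'_def using convexD[OF BsN gB yB, of "1 - t" t] t0' t23 by simp
      have "a' - \<rho> n = t *\<^sub>R (x - \<rho> n)" unfolding a'_def by (simp add: algebra_simps)
      hence "norm (a' - \<rho> n) = t * D0" unfolding D0_def using t0' by simp
      hence a'r: "norm (a' - \<rho> n) = r/2" unfolding t_def using D00 by simp
      have "norm (a' - \<rho> n) \<le> norm (a' - e) + norm (e - \<rho> n)" by (rule tri)
      hence a'e1: "r/4 \<le> norm (a' - e)" using a'r re by (simp add: norm_minus_commute)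
      have "norm (a' - e) \<le> norm (a' - \<rho> n) + norm (\<rho> n - e)" by (rule tri)
      hence a'e2: "norm (a' - e) \<le> 3*r/4" using a'r re by linarith
      have eqv: "(b' - a') - v = (1 - t) *\<^sub>R ((g n - \<rho> n) - v) + t *\<^sub>R ((y - x) - v)"
        unfolding a'_def b'_def by (simp add: algebra_simps)
      have "norm ((b' - a') - v) \<le> norm ((1 - t) *\<^sub>R ((g n - \<rho> n) - v)) + norm (t *\<^sub>R ((y - x) - v))"
        unfolding eqv by (rule norm_triangle_ineq)
      also have "\<dots> = (1 - t) * norm ((g n - \<rho> n) - v) + t * \<sigma>" unfolding \<sigma>_def using t0' t23 by simp
      also have "\<dots> \<le> norm ((g n - \<rho> n) - v) + t * \<sigma>"
        using t0' t23 mult_left_le_one_le[of "norm ((g n - \<rho> n) - v)" "1 - t"] by simp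
      finally have bav: "norm ((b' - a') - v) \<le> norm ((g n - \<rho> n) - v) + t * \<sigma>" .
      have "t * \<sigma> < t * (c * s)" using sig t0' by simp
      hence bav2: "norm ((b' - a') - v) < \<eta>/4 + \<eta>/3" using bav N2[OF n1(2)] tcs by linarith
      have "norm (b' - a') \<le> norm v + norm ((b' - a') - v)" using norm_triangle_sub[of "b' - a'" v] by simp
      hence ba: "norm (b' - a') < d + 7*\<eta>/12" using bav2 nv by linarith
      have "norm a' \<le> norm e + norm (a' - e)" using norm_triangle_sub[of a' e] by simp
      hence na': "norm a' \<le> norm e + 3*r/4" using a'e2 by linarith
      hence na'R: "norm a' \<le> R" unfolding R_def using r nv norm_ge_zero[of v] by linarith
      have "norm b' \<le> norm a' + norm (b' - a')" using norm_triangle_sub[of b' a'] by simp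
      hence "norm b' \<le> R" unfolding R_def using na' ba h0 r by linarith
      moreover have "\<forall>x\<in>Bs n. norm x \<le> R \<longrightarrow> (\<exists>y\<in>B. dist x y < \<tau>)" using N4[OF n1(4)] by (rule conjunct1)
      ultimately obtain b'' where b''B: "b'' \<in> B" and bb: "dist b' b'' < \<tau>" using b'B by blast
      have "\<forall>x\<in>As n. norm x \<le> R \<longrightarrow> (\<exists>y\<in>A. dist x y < \<tau>)" using N3[OF n1(3)] by (rule conjunct1)
      then obtain a'' where a''A: "a'' \<in> A" and aa: "dist a' a'' < \<tau>" using a'A na'R by blast
      have "norm (a'' - b'') \<le> norm (a'' - a') + norm (a' - b'')" by (rule tri)
      moreover have "norm (a' - b'') \<le> norm (a' - b') + norm (b' - b'')" by (rule tri)
      moreover have "norm (a' - b') = norm (b' - a')" by (rule norm_minus_commute)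
      moreover have "norm (a'' - a') < \<tau>" using aa by (simp add: dist_norm norm_minus_commute)
      moreover have "norm (b' - b'') < \<tau>" using bb by (simp add: dist_norm)
      ultimately have "norm (a'' - b'') < d + \<eta>0" using ba t0 h0 by linarith
      hence "norm (a'' - e) < r/8" by (rule W0[OF a''A b''B])
      moreover have "norm (a' - e) \<le> norm (a' - a'') + norm (a'' - e)" by (rule tri)
      moreover have "norm (a' - a'') < \<tau>" using aa by (simp add: dist_norm)
      ultimately have "norm (a' - e) < r/4" using t0 by linarith
      thus False using a'e1 by linarith
    qed
  qed
  thus ?thesis using c0 by blast
qed

lemma caseB:
  fixes A B :: "'a::{real_inner,complete_space} set"
  assumes cA: "closed A" "convex A" "A \<noteq> {}" and cB: "closed B" "convex B" "B \<noteq> {}"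
    and ef: "norm (e - metric_proj B e) = d" and pf: "metric_proj A (metric_proj B e) = e"
    and W: "\<forall>\<epsilon>>0. \<exists>\<eta>>0. \<forall>a\<in>A. \<forall>b\<in>B. norm (a - b) < d + \<eta> \<longrightarrow> norm (a - e) < \<epsilon>"
    and As: "\<And>n. closed (As n) \<and> convex (As n) \<and> As n \<noteq> {}"
    and Bs: "\<And>n. closed (Bs n) \<and> convex (Bs n) \<and> Bs n \<noteq> {}"
    and awA: "AW_converges As A" and awB: "AW_converges Bs B"
    and rec: "\<And>n. b (Suc n) = metric_proj (Bs (Suc n)) (a n) \<and> a (Suc n) = metric_proj (As (Suc n)) (b (Suc n))"
  shows "convergent a \<and> convergent b"
proof -
  define f where "f = metric_proj B e"
  define v where "v = f - e"
  have nv: "norm v = d" using ef unfolding v_def f_def by (simp add: norm_minus_commute)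
  define g where "g n = metric_proj (Bs n) e" for n
  define h where "h n = metric_proj (As n) f" for n
  define \<rho> where "\<rho> n = metric_proj (As n) (g n)" for n
  have gl: "g \<longlonglongrightarrow> f" unfolding g_def f_def by (rule proj_conv[OF awB cB Bs])
  have hl: "h \<longlonglongrightarrow> e" unfolding h_def using proj_conv[OF awA cA As, of f] pf unfolding f_def by simp
  have \<rho>A: "\<rho> n \<in> As n" for n unfolding \<rho>_def using As[of n] by (intro mp_in) auto
  have gB: "g n \<in> Bs n" for n unfolding g_def using Bs[of n] by (intro mp_in) auto
  have \<rho>le: "norm (norm (\<rho> n - e)) \<le> norm (g n - f) + norm (h n - e)" for n
  proof -
    have "norm (\<rho> n - h n) \<le> norm (g n - f)" unfolding \<rho>_def h_def using As[of n] by (intro mp_nonexp) auto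
    moreover have "norm (\<rho> n - e) \<le> norm (\<rho> n - h n) + norm (h n - e)" by (rule tri)
    ultimately show ?thesis by simp
  qed
  have "(\<lambda>n. norm (g n - f) + norm (h n - e)) \<longlonglongrightarrow> 0"
  proof -
    have "(\<lambda>n. norm (g n - f)) \<longlonglongrightarrow> 0" using gl by (simp add: LIM_zero tendsto_norm_zero)
    moreover have "(\<lambda>n. norm (h n - e)) \<longlonglongrightarrow> 0" using hl by (simp add: LIM_zero tendsto_norm_zero)
    ultimately show ?thesis using tendsto_add_zero by blast
  qed
  hence "(\<lambda>n. norm (\<rho> n - e)) \<longlonglongrightarrow> 0" by (rule Lim_null_comparison[rotated]) (use \<rho>le in simp)
  hence \<rho>l: "\<rho> \<longlonglongrightarrow> e" by (simp add: tendsto_norm_zero_iff LIM_zero_iff)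
  have wl: "(\<lambda>n. g n - \<rho> n) \<longlonglongrightarrow> v" unfolding v_def by (intro tendsto_diff gl \<rho>l)
  have main: "\<exists>M. \<forall>n\<ge>M. norm (a n - e) \<le> r" if r: "0 < r" for r
  proof -
    obtain c N1 where c0: "0 < c" and N1: "\<And>n x y. n \<ge> N1 \<Longrightarrow> x \<in> As n \<Longrightarrow> y \<in> Bs n \<Longrightarrow> r \<le> norm (x - e)
        \<Longrightarrow> c * norm (x - e) \<le> norm ((y - x) - v)"
      using K_lemma[OF cA(3) cB(3) As Bs awA awB W nv \<rho>A gB \<rho>l wl r] by blast
    define c' where "c' = c/2"
    have c'0: "0 < c'" unfolding c'_def using c0 by simp
    define q where "q = 1 + c'^2/2"
    have q1: "1 \<le> q" unfolding q_def by simp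
    have q0: "0 < q" using q1 by simp
    have q2: "1 < q" unfolding q_def using c'0 by simp
    obtain N2 where N2: "\<And>n. n \<ge> N2 \<Longrightarrow> norm ((g n - \<rho> n) - v) < c*r/2"
      using LIMSEQ_D[OF wl, of "c*r/2"] c0 r by auto
    have mr: "0 < min r (c'^2 * r/4)" using r c'0 by simp
    obtain N3 where N3: "\<And>n. n \<ge> N3 \<Longrightarrow> norm (\<rho> n - e) < min r (c'^2 * r/4)"
      using LIMSEQ_D[OF \<rho>l mr] by auto
    define N where "N = max N1 (max N2 N3)"
    have st: "norm (a (Suc n) - e)^2 \<le> max (r^2) (norm (a n - e)^2 / q)" if nN: "N \<le> Suc n" for n
    proof -
      define m where "m = Suc n"
      define s where "s = norm (a m - e)"
      define p where "p = norm (a n - e)"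
      have "s^2 \<le> max (r^2) (p^2 / q)"
      proof (cases "s < r")
        case True
        hence "s^2 \<le> r^2" unfolding s_def by (intro power_mono) auto
        thus ?thesis by simp
      next
        case False
        hence rs: "r \<le> s" by simp
        have mN: "N1 \<le> m" "N2 \<le> m" "N3 \<le> m" using nN unfolding N_def m_def by auto
        define x where "x = b m"
        have xe: "x = metric_proj (Bs m) (a n)" unfolding x_def m_def using rec[of n] by simp
        have am: "a m = metric_proj (As m) x" unfolding x_def m_def using rec[of n] by simp
        have xB: "x \<in> Bs m" unfolding xe using Bs[of m] by (intro mp_in) auto
        have aA: "a m \<in> As m" unfolding am using As[of m] by (intro mp_in) auto
        define X where "X = norm ((x - a m) - (g m - \<rho> m))"
        define Y where "Y = norm (a m - \<rho> m)"
        define \<epsilon> where "\<epsilon> = norm (\<rho> m - e)"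
        have firm: "Y^2 + X^2 \<le> norm (x - g m)^2"
          unfolding X_def Y_def am \<rho>_def using As[of m] by (intro mp_firm) auto
        have "norm (x - g m) \<le> p" unfolding xe g_def p_def using Bs[of m] by (intro mp_nonexp) auto
        hence "norm (x - g m)^2 \<le> p^2" by (intro power_mono) auto
        hence XY: "Y^2 + X^2 \<le> p^2" using firm by linarith
        have "c * s \<le> norm ((x - a m) - v)" unfolding s_def by (rule N1[OF mN(1) aA xB]) (use rs s_def in simp)
        moreover have "norm ((x - a m) - v) \<le> X + norm ((g m - \<rho> m) - v)" unfolding X_def by (rule tri)
        moreover have "norm ((g m - \<rho> m) - v) < c*r/2" by (rule N2[OF mN(2)])
        moreover have "c * r \<le> c * s" using rs c0 by simp
        ultimately have cX: "c' * s \<le> X" unfolding c'_def by linarith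
        have e1: "\<epsilon> < min r (c'^2 * r/4)" unfolding \<epsilon>_def by (rule N3[OF mN(3)])
        have "s \<le> Y + \<epsilon>" unfolding s_def Y_def \<epsilon>_def by (rule tri)
        note sY = this
        have e0: "0 \<le> \<epsilon>" unfolding \<epsilon>_def by simp
        have e2: "\<epsilon> \<le> r" "\<epsilon> \<le> c'^2 * r / 4" using e1 by auto
        have Y0: "0 \<le> Y" unfolding Y_def by simp
        have "s^2 * (1 + c'^2/2) \<le> p^2"
          by (rule real_contr[OF r rs e0 e2 Y0 sY XY cX]) (use c'0 in simp)
        hence "s^2 \<le> p^2 / q" unfolding q_def using q0 q_def by (simp add: pos_le_divide_eq)
        thus ?thesis by simp
      qed
      thus ?thesis unfolding s_def p_def m_def .
    qed
    define u where "u k = norm (a (N + k) - e)^2" for k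
    have ub: "u k \<le> max (r^2) (u 0 / q^k)" for k
    proof (rule iterate_bound[OF q1])
      show "0 \<le> r^2" by simp
      show "u (Suc k) \<le> max (r^2) (u k / q)" for k unfolding u_def using st[of "N + k"] by simp
    qed
    have "(\<lambda>k. u 0 * (1/q)^k) \<longlonglongrightarrow> u 0 * 0"
      using q2 by (intro tendsto_intros LIMSEQ_realpow_zero) (auto simp: divide_le_eq)
    hence "eventually (\<lambda>k. u 0 * (1/q)^k < r^2) sequentially"
      using r by (intro order_tendstoD(2)) auto
    then obtain K where K: "\<And>k. k \<ge> K \<Longrightarrow> u 0 * (1/q)^k < r^2" unfolding eventually_sequentially by blast
    show ?thesis
    proof (intro exI allI impI)
      fix n assume n: "N + K \<le> n"
      define k where "k = n - N"
      have nk: "n = N + k" "K \<le> k" using n unfolding k_def by auto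
      have "u 0 / q^k = u 0 * (1/q)^k" by (simp add: power_one_over)
      hence "u k \<le> r^2" using ub[of k] K[OF nk(2)] by simp
      hence "norm (a n - e)^2 \<le> r^2" unfolding u_def nk(1) .
      thus "norm (a n - e) \<le> r" by (rule power2_le_imp_le) (use r in simp)
    qed
  qed
  have al: "a \<longlonglongrightarrow> e"
  proof (rule LIMSEQ_I)
    fix r :: real assume "0 < r"
    then obtain M where M: "\<And>n. n \<ge> M \<Longrightarrow> norm (a n - e) \<le> r/2" using main[of "r/2"] by auto
    show "\<exists>no. \<forall>n\<ge>no. norm (a n - e) < r"
    proof (intro exI allI impI)
      fix n assume "M \<le> n"
      hence "norm (a n - e) \<le> r/2" by (rule M)
      thus "norm (a n - e) < r" using \<open>0 < r\<close> by linarith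
    qed
  qed
  have bl: "(\<lambda>n. norm (b (Suc n) - f)) \<longlonglongrightarrow> 0"
  proof (rule Lim_null_comparison[rotated])
    have "(\<lambda>n. norm (a n - e)) \<longlonglongrightarrow> 0" using al by (simp add: LIM_zero tendsto_norm_zero)
    moreover have "(\<lambda>n. norm (g (Suc n) - f)) \<longlonglongrightarrow> 0"
      using LIMSEQ_Suc[OF gl] by (simp add: LIM_zero tendsto_norm_zero)
    ultimately show "(\<lambda>n. norm (a n - e) + norm (g (Suc n) - f)) \<longlonglongrightarrow> 0" using tendsto_add_zero by blast
    show "\<forall>\<^sub>F n in sequentially. norm (norm (b (Suc n) - f)) \<le> norm (a n - e) + norm (g (Suc n) - f)"
    proof (rule always_eventually, rule allI)
      fix n
      have "norm (b (Suc n) - g (Suc n)) \<le> norm (a n - e)"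
        unfolding g_def using rec[of n] Bs[of "Suc n"] by (simp add: mp_nonexp)
      moreover have "norm (b (Suc n) - f) \<le> norm (b (Suc n) - g (Suc n)) + norm (g (Suc n) - f)" by (rule tri)
      ultimately show "norm (norm (b (Suc n) - f)) \<le> norm (a n - e) + norm (g (Suc n) - f)" by simp
    qed
  qed
  hence "(\<lambda>n. b (Suc n)) \<longlonglongrightarrow> f" by (simp add: tendsto_norm_zero_iff LIM_zero_iff)
  hence "b \<longlonglongrightarrow> f" by (rule LIMSEQ_imp_Suc)
  thus ?thesis using al unfolding convergent_def by blast
qed

theorem corollary4p18:
  fixes A B :: "'a::{real_inner, complete_space} set"
  assumes "body A" and "body B" and "LUR A"
    and "best_A A B \<noteq> {}" and "best_B A B \<noteq> {}"
  shows "stable A B"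
  unfolding stable_def
proof (intro allI impI)
  fix As Bs :: "nat \<Rightarrow> 'a set" and a b :: "nat \<Rightarrow> 'a"
  assume H: "(\<forall>n. closed (As n) \<and> convex (As n) \<and> As n \<noteq> {}) \<and>
              (\<forall>n. closed (Bs n) \<and> convex (Bs n) \<and> Bs n \<noteq> {}) \<and>
              AW_converges As A \<and> AW_converges Bs B"
  assume R: "\<forall>n. b (Suc n) = metric_proj (Bs (Suc n)) (a n) \<and> a (Suc n) = metric_proj (As (Suc n)) (b (Suc n))"
  have As: "\<And>n. closed (As n) \<and> convex (As n) \<and> As n \<noteq> {}" using H by blast
  have Bs: "\<And>n. closed (Bs n) \<and> convex (Bs n) \<and> Bs n \<noteq> {}" using H by blast
  have awA: "AW_converges As A" and awB: "AW_converges Bs B" using H by blast+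
  have rec: "\<And>n. b (Suc n) = metric_proj (Bs (Suc n)) (a n) \<and> a (Suc n) = metric_proj (As (Suc n)) (b (Suc n))"
    using R by blast
  have cA: "closed A" "convex A" "A \<noteq> {}" using assms(1) unfolding body_def by auto
  have cB: "closed B" "convex B" "B \<noteq> {}" using assms(2) unfolding body_def by auto
  have iB: "interior B \<noteq> {}" using assms(2) unfolding body_def by auto
  show "convergent a \<and> convergent b"
  proof (cases "interior A \<inter> B = {}")
    case False
    then obtain c \<rho> where "0 < \<rho>" "cball c \<rho> \<subseteq> A" "cball c \<rho> \<subseteq> B"
      using slater[OF cB(2) iB] by blast
    thus ?thesis using caseA[OF cA(3) cB(3) _ _ _ As Bs awA awB rec] by blast
  next
    case True
    obtain e where eE: "e \<in> best_A A B" using assms(4) by blast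
    from geometry[OF assms(1,2,3) eE True]
    have g1: "norm (e - metric_proj B e) = set_dist A B" "metric_proj A (metric_proj B e) = e"
      and g2: "\<forall>\<epsilon>>0. \<exists>\<eta>>0. \<forall>a\<in>A. \<forall>b\<in>B. norm (a - b) < set_dist A B + \<eta> \<longrightarrow> norm (a - e) < \<epsilon>"
      by blast+
    show ?thesis by (rule caseB[OF cA cB g1 g2 As Bs awA awB rec])
  qed
qed

end
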